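(* For every $\beta\in\mathbb N^d\setminus\{0\}$, $$\sum_{r=1}^{|\beta|}\binom{|\beta|}{r}\sum_{p(\beta,r)}\frac{r!}{k_1!\cdots k_{|\beta|}!}\le2^{|\beta|(d+1)}.$$
   Context: For $\alpha,\gamma\in\mathbb N^d$ write $\gamma\prec\alpha$ if either $|\gamma|<|\alpha|$; or $|\gamma|=|\alpha|$ and $\gamma_1<\alpha_1$; or $|\gamma|=|\alpha|$, $\gamma_1=\alpha_1,\dots,\gamma_k=\alpha_k$ and $\gamma_{k+1}<\alpha_{k+1}$ for some $1\le k<d$. For $\beta\in\mathbb N^d$ with $n=|\beta|\ge1$ and $1\le r\le n$, $p(\beta,r)$ is the set of tuples $(k_1,\dots,k_n;\beta^{(1)},\dots,\beta^{(n)})$ with $k_j\in\mathbb N$, $\beta^{(j)}\in\mathbb N^d$, such that for some $1\le s\le n$: $k_j=0$ and $\beta^{(j)}=0$ for $1\le j\le n-s$; $k_j>0$ for $n-s+1\le j\le n$; $0\prec\beta^{(n-s+1)}\prec\dots\prec\beta^{(n)}$; and $\sum_jk_j=r$, $\sum_jk_j\beta^{(j)}=\beta$ (this is the index set of the multivariate Faà di Bruno formula). *)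

theory Defs
  imports Complex_Main
begin

text \<open>Multi-indices in N^d are represented as lists of naturals of length d
  (0-based components). The order gamma < alpha of the paper:\<close>

definition mi_prec :: "nat \<Rightarrow> nat list \<Rightarrow> nat list \<Rightarrow> bool" where
  "mi_prec d \<gamma> \<alpha> \<longleftrightarrow>
     sum_list \<gamma> < sum_list \<alpha> \<or>
     (sum_list \<gamma> = sum_list \<alpha> \<and>
        (\<exists>k<d. (\<forall>i<k. \<gamma> ! i = \<alpha> ! i) \<and> \<gamma> ! k < \<alpha> ! k))"

text \<open>A tuple (k_1..k_n; beta^(1)..beta^(n)) is a pair of lists (k, B) of length
  n = |beta| (0-based: entry j stands for index j+1), each B!j of length d.\<close>

definition faa_p :: "nat \<Rightarrow> nat list \<Rightarrow> nat \<Rightarrow> (nat list \<times> nat list list) set" where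
  "faa_p d \<beta> r = (let n = sum_list \<beta> in
     {(k, B). length k = n \<and> length B = n \<and> (\<forall>j<n. length (B ! j) = d) \<and>
       (\<exists>s. 1 \<le> s \<and> s \<le> n \<and>
          (\<forall>j<n - s. k ! j = 0 \<and> B ! j = replicate d 0) \<and>
          (\<forall>j. n - s \<le> j \<and> j < n \<longrightarrow> 0 < k ! j) \<and>
          mi_prec d (replicate d 0) (B ! (n - s)) \<and>
          (\<forall>j. n - s \<le> j \<and> j + 1 < n \<longrightarrow> mi_prec d (B ! j) (B ! (j + 1)))) \<and>
       sum_list k = r \<and>
       (\<forall>i<d. (\<Sum>j<n. k ! j * (B ! j) ! i) = \<beta> ! i)})"

end

theory Submission imports Defs "HOL-Combinatorics.Multiset_Permutations" begin

lemma mi_prec_trans: "mi_prec d a b \<Longrightarrow> mi_prec d b c \<Longrightarrow> mi_prec d a c"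
  unfolding mi_prec_def
proof (elim disjE conjE exE)
  fix k1 k2
  assume h: "sum_list a = sum_list b" "k1 < d" "\<forall>i<k1. a ! i = b ! i" "a ! k1 < b ! k1"
    "sum_list b = sum_list c" "k2 < d" "\<forall>i<k2. b ! i = c ! i" "b ! k2 < c ! k2"
  show "sum_list a < sum_list c \<or> sum_list a = sum_list c \<and> (\<exists>k<d. (\<forall>i<k. a ! i = c ! i) \<and> a ! k < c ! k)"
  proof (cases "k1 < k2")
    case True then show ?thesis using h by (intro disjI2) (auto intro!: exI[of _ k1])
  next
    case False then show ?thesis using h
      by (intro disjI2, cases "k1 = k2") (auto intro!: exI[of _ k2])
  qed
qed auto

lemma mi_prec_asym: "mi_prec d a b \<Longrightarrow> \<not> mi_prec d b a"
  unfolding mi_prec_def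
  by (metis linorder_neqE_nat not_less_iff_gr_or_eq order_less_asym)

lemma mi_prec_nz: "mi_prec d a b \<Longrightarrow> b \<noteq> replicate d 0"
proof
  assume "mi_prec d a b" "b = replicate d 0"
  then show False unfolding mi_prec_def by (auto simp: sum_list_replicate)
qed

lemma sorted_wrt_unique:
  assumes "\<And>x y. R x y \<Longrightarrow> \<not> R y x"
  shows "sorted_wrt R xs \<Longrightarrow> sorted_wrt R ys \<Longrightarrow> set xs = set ys \<Longrightarrow> xs = ys"
proof (induction xs arbitrary: ys)
  case Nil then show ?case by simp
next
  case (Cons x xs)
  then obtain y ys' where ys: "ys = y # ys'" by (cases ys) auto
  have irr: "\<And>z. \<not> R z z" using assms by blast
  have "x = y"
  proof (rule ccontr)
    assume "x \<noteq> y"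
    then have "y \<in> set xs" "x \<in> set ys'" using Cons.prems ys by auto
    then have "R x y" "R y x" using Cons.prems ys by auto
    then show False using assms by blast
  qed
  moreover have "x \<notin> set xs" "y \<notin> set ys'" using Cons.prems ys irr by auto
  ultimately have "set xs = set ys'" using Cons.prems ys by auto
  then show ?case using Cons ys \<open>x = y\<close> by auto
qed


definition vecs :: "nat \<Rightarrow> nat list \<Rightarrow> nat list list set" where
  "vecs d \<beta> = {vs. (\<forall>v\<in>set vs. length v = d \<and> v \<noteq> replicate d 0) \<and>
                    (\<forall>i<d. (\<Sum>v\<leftarrow>vs. v ! i) = \<beta> ! i)}"

lemma nz_ex: "length (v::nat list) = d \<Longrightarrow> v \<noteq> replicate d 0 \<Longrightarrow> \<exists>i<d. 0 < v ! i"
proof (rule ccontr)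
  assume a: "length v = d" "v \<noteq> replicate d 0" "\<not> (\<exists>i<d. 0 < v ! i)"
  have "v = replicate d 0"
  proof (rule nth_equalityI)
    fix i assume "i < length v"
    then show "v ! i = replicate d 0 ! i" using a by (simp add: nth_replicate)
  qed (use a in simp)
  then show False using a by simp
qed

lemma vecs_zero: "length \<beta> = d \<Longrightarrow> sum_list \<beta> = 0 \<Longrightarrow> vecs d \<beta> \<subseteq> {[]}"
proof
  fix vs assume l: "length \<beta> = d" "sum_list \<beta> = 0" and vs: "vs \<in> vecs d \<beta>"
  show "vs \<in> {[]}"
  proof (cases vs)
    case (Cons v ws)
    then have "length v = d" "v \<noteq> replicate d 0" using vs by (auto simp: vecs_def)
    then obtain i where i: "i < d" "0 < v ! i" using nz_ex by blast
    have "(\<Sum>v\<leftarrow>vs. v ! i) = \<beta> ! i" using vs i by (auto simp: vecs_def)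
    moreover have "\<beta> ! i = 0" using l i by (simp add: sum_list_eq_0_iff)
    ultimately show ?thesis using Cons i by simp
  qed simp
qed


lemma vecs_bound:
  "length \<beta> = d \<Longrightarrow> finite (vecs d \<beta>) \<and> card (vecs d \<beta>) \<le> (2*d)^(sum_list \<beta>)"
proof (induction "sum_list \<beta>" arbitrary: \<beta>)
  case 0
  then have h: "vecs d \<beta> \<subseteq> {[]}" using vecs_zero[of \<beta> d] by simp
  have "finite (vecs d \<beta>)" by (rule finite_subset[OF h]) simp
  moreover have "card (vecs d \<beta>) \<le> 1" using card_mono[OF _ h] by simp
  ultimately show ?case using 0 by (metis power_0)
next
  case (Suc m)
  define I where "I = {i. i<d \<and> 0 < \<beta>!i}"
  define \<beta>' where "\<beta>' i = \<beta>[i := \<beta>!i - 1]" for i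
  define e where "e i = (replicate d (0::nat))[i := 1]" for i
  define g where "g i (vs :: nat list list) = (case vs of [] \<Rightarrow> [] | w#ws \<Rightarrow> w[i := w!i + 1] # ws)" for i vs
  have l': "length (\<beta>' i) = d" for i using Suc.prems by (simp add: \<beta>'_def)
  have s': "sum_list (\<beta>' i) = m" if "i \<in> I" for i
    using that Suc.hyps(2) Suc.prems by (auto simp: \<beta>'_def I_def sum_list_update elem_le_sum_list)
  have IH: "finite (vecs d (\<beta>' i)) \<and> card (vecs d (\<beta>' i)) \<le> (2*d)^m" if "i \<in> I" for i
    using Suc.hyps(1)[OF s'[OF that, symmetric] l'] s'[OF that] by simp
  have cover: "vecs d \<beta> \<subseteq> (\<Union>i\<in>I. Cons (e i) ` vecs d (\<beta>' i) \<union> g i ` vecs d (\<beta>' i))"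
  proof
    fix vs assume vs: "vs \<in> vecs d \<beta>"
    have "\<beta> \<noteq> replicate d 0" using Suc.hyps(2) by (metis sum_list_replicate mult_0_right nat.simps(3))
    then obtain i0 where i0: "i0 < d" "0 < \<beta> ! i0" using nz_ex Suc.prems by blast
    have "vs \<noteq> []"
    proof
      assume "vs = []"
      then show False using vs i0 by (auto simp: vecs_def)
    qed
    then obtain v ws where vws: "vs = v # ws" by (cases vs) auto
    have v: "length v = d" "v \<noteq> replicate d 0" and ws: "\<forall>u\<in>set ws. length u = d \<and> u \<noteq> replicate d 0"
      using vs vws by (auto simp: vecs_def)
    have co: "v ! j + (\<Sum>u\<leftarrow>ws. u ! j) = \<beta> ! j" if "j < d" for j
      using vs vws that by (auto simp: vecs_def)
    obtain i where i: "i < d" "0 < v ! i" using nz_ex v by blast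
    have iI: "i \<in> I" using co[OF i(1)] i by (auto simp: I_def)
    show "vs \<in> (\<Union>i\<in>I. Cons (e i) ` vecs d (\<beta>' i) \<union> g i ` vecs d (\<beta>' i))"
    proof (cases "v = e i")
      case True
      have "ws \<in> vecs d (\<beta>' i)"
        unfolding vecs_def
      proof (intro CollectI conjI allI impI)
        show "\<forall>u\<in>set ws. length u = d \<and> u \<noteq> replicate d 0" using ws .
        fix j assume j: "j < d"
        show "(\<Sum>u\<leftarrow>ws. u ! j) = \<beta>' i ! j"
          using co[OF j] True j Suc.prems i by (auto simp: e_def \<beta>'_def nth_list_update)
      qed
      then show ?thesis using iI vws True by blast
    next
      case False
      define w where "w = v[i := v!i - 1]"
      have lw: "length w = d" using v by (simp add: w_def)
      have wnz: "w \<noteq> replicate d 0"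
      proof
        assume wz: "w = replicate d 0"
        have "v = e i"
        proof (rule nth_equalityI)
          show "length v = length (e i)" using v by (simp add: e_def)
          fix j assume "j < length v"
          then show "v ! j = e i ! j" using wz i v
            by (cases "j = i") (auto simp: w_def e_def nth_list_update dest!: arg_cong[where f="\<lambda>x. x ! j"])
        qed
        then show False using False by simp
      qed
      have "w # ws \<in> vecs d (\<beta>' i)"
        unfolding vecs_def
      proof (intro CollectI conjI allI impI)
        show "\<forall>u\<in>set (w # ws). length u = d \<and> u \<noteq> replicate d 0" using ws lw wnz by simp
        fix j assume j: "j < d"
        show "(\<Sum>u\<leftarrow>w # ws. u ! j) = \<beta>' i ! j"
          using co[OF j] j Suc.prems i v by (auto simp: w_def \<beta>'_def nth_list_update)
      qed
      moreover have "g i (w # ws) = vs"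
        using vws i v by (simp add: g_def w_def)
      ultimately show ?thesis using iI by blast
    qed
  qed
  have fI: "finite I" by (simp add: I_def)
  have cI: "card I \<le> d"
    by (metis (no_types, lifting) I_def card_lessThan card_mono finite_lessThan lessThan_iff mem_Collect_eq subsetI)
  have fin: "finite (vecs d \<beta>)"
    using cover fI IH by (meson finite_UN_I finite_Un finite_imageI finite_subset)
  have "card (vecs d \<beta>) \<le> card (\<Union>i\<in>I. Cons (e i) ` vecs d (\<beta>' i) \<union> g i ` vecs d (\<beta>' i))"
    using cover fI IH by (intro card_mono) auto
  also have "\<dots> \<le> (\<Sum>i\<in>I. card (Cons (e i) ` vecs d (\<beta>' i) \<union> g i ` vecs d (\<beta>' i)))"
    using fI by (rule card_UN_le)
  also have "\<dots> \<le> (\<Sum>i\<in>I. 2 * (2*d)^m)"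
  proof (rule sum_mono)
    fix i assume i: "i \<in> I"
    have "card (Cons (e i) ` vecs d (\<beta>' i) \<union> g i ` vecs d (\<beta>' i))
        \<le> card (Cons (e i) ` vecs d (\<beta>' i)) + card (g i ` vecs d (\<beta>' i))" by (rule card_Un_le)
    also have "\<dots> \<le> card (vecs d (\<beta>' i)) + card (vecs d (\<beta>' i))"
      by (intro add_mono card_image_le) (use IH[OF i] in auto)
    finally show "card (Cons (e i) ` vecs d (\<beta>' i) \<union> g i ` vecs d (\<beta>' i)) \<le> 2 * (2*d)^m"
      using IH[OF i] by linarith
  qed
  also have "\<dots> = card I * (2 * (2*d)^m)" by simp
  also have "\<dots> \<le> d * (2 * (2*d)^m)" using cI by simp
  also have "\<dots> = (2*d)^(Suc m)" by simp
  finally show ?case using fin Suc.hyps(2) by simp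
qed


lemma chain_lemma:
  assumes "\<forall>j. a \<le> j \<and> j + 1 < n \<longrightarrow> mi_prec d (B!j) (B!(j+1))"
  shows "a \<le> i \<Longrightarrow> i < j \<Longrightarrow> j < n \<Longrightarrow> mi_prec d (B!i) (B!j)"
proof (induction j)
  case 0 then show ?case by simp
next
  case (Suc j)
  have st: "mi_prec d (B!j) (B!(Suc j))" using assms Suc.prems by auto
  show ?case
  proof (cases "i = j")
    case True then show ?thesis using st by simp
  next
    case False
    then have "mi_prec d (B!i) (B!j)" using Suc by simp
    then show ?thesis using st mi_prec_trans by blast
  qed
qed

lemma faa_props:
  assumes "(k, B) \<in> faa_p d \<beta> r" "n = sum_list \<beta>"
  obtains s where "1 \<le> s" "s \<le> n" "length k = n" "length B = n" "\<forall>j<n. length (B!j) = d"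
    "\<forall>j<n-s. k!j = 0 \<and> B!j = replicate d 0" "\<forall>j. n-s \<le> j \<and> j < n \<longrightarrow> 0 < k!j"
    "\<forall>j. n-s \<le> j \<and> j < n \<longrightarrow> B!j \<noteq> replicate d 0"
    "\<forall>i j. n-s \<le> i \<longrightarrow> i < j \<longrightarrow> j < n \<longrightarrow> mi_prec d (B!i) (B!j)"
    "sum_list k = r" "\<forall>i<d. (\<Sum>j<n. k!j * (B!j)!i) = \<beta>!i"
proof -
  from assms obtain s where
    h: "length k = n" "length B = n" "\<forall>j<n. length (B!j) = d"
      "1 \<le> s" "s \<le> n" "\<forall>j<n - s. k ! j = 0 \<and> B ! j = replicate d 0"
      "\<forall>j. n - s \<le> j \<and> j < n \<longrightarrow> 0 < k ! j"
      "mi_prec d (replicate d 0) (B ! (n - s))"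
      "\<forall>j. n - s \<le> j \<and> j + 1 < n \<longrightarrow> mi_prec d (B ! j) (B ! (j + 1))"
      "sum_list k = r" "\<forall>i<d. (\<Sum>j<n. k ! j * (B ! j) ! i) = \<beta> ! i"
    unfolding faa_p_def Let_def by auto
  have ch: "\<forall>i j. n-s \<le> i \<longrightarrow> i < j \<longrightarrow> j < n \<longrightarrow> mi_prec d (B!i) (B!j)"
    using chain_lemma[OF h(9)] by blast
  have nz: "\<forall>j. n-s \<le> j \<and> j < n \<longrightarrow> B!j \<noteq> replicate d 0"
  proof (intro allI impI)
    fix j assume j: "n-s \<le> j \<and> j < n"
    show "B!j \<noteq> replicate d 0"
    proof (cases "j = n - s")
      case True then show ?thesis using h(8) mi_prec_nz by blast
    next
      case False then have "mi_prec d (B!(n-s)) (B!j)" using ch j by auto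
      then show ?thesis using mi_prec_nz by blast
    qed
  qed
  show ?thesis using that h ch nz by blast
qed


definition phi :: "nat \<Rightarrow> nat list \<times> nat list list \<Rightarrow> nat list multiset" where
  "phi n x = (\<Sum>j<n. replicate_mset (fst x ! j) (snd x ! j))"

lemma count_phi: "count (phi n (k, B)) v = (\<Sum>j<n. if B!j = v then k!j else 0)"
  by (auto simp: phi_def count_sum intro!: sum.cong)

lemma size_phi: "size (phi n (k, B)) = (\<Sum>j<n. k!j)"
  by (induction n) (auto simp: phi_def)

lemma sum_mset_phi:
  "sum_mset (image_mset f (phi n (k, B))) = (\<Sum>j<n. k!j * f (B!j))"
  by (induction n) (auto simp: phi_def)

lemma phi_info:
  assumes "(k, B) \<in> faa_p d \<beta> r" "n = sum_list \<beta>"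
  obtains s where "1 \<le> s" "s \<le> n" "length k = n" "length B = n" "\<forall>j<n. length (B!j) = d"
    "\<forall>j<n-s. k!j = 0 \<and> B!j = replicate d 0" "\<forall>j. n-s \<le> j \<and> j < n \<longrightarrow> 0 < k!j"
    "\<forall>j. n-s \<le> j \<and> j < n \<longrightarrow> B!j \<noteq> replicate d 0"
    "\<forall>i j. n-s \<le> i \<longrightarrow> i < j \<longrightarrow> j < n \<longrightarrow> mi_prec d (B!i) (B!j)"
    "sum_list k = r" "\<forall>i<d. (\<Sum>j<n. k!j * (B!j)!i) = \<beta>!i"
    "inj_on ((!) B) {n-s..<n}"
    "\<forall>j. n-s \<le> j \<and> j < n \<longrightarrow> count (phi n (k, B)) (B!j) = k!j"
    "set_mset (phi n (k, B)) = (!) B ` {n-s..<n}"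
    "size (phi n (k, B)) = r"
proof -
  obtain s where h: "1 \<le> s" "s \<le> n" "length k = n" "length B = n" "\<forall>j<n. length (B!j) = d"
    "\<forall>j<n-s. k!j = 0 \<and> B!j = replicate d 0" "\<forall>j. n-s \<le> j \<and> j < n \<longrightarrow> 0 < k!j"
    "\<forall>j. n-s \<le> j \<and> j < n \<longrightarrow> B!j \<noteq> replicate d 0"
    "\<forall>i j. n-s \<le> i \<longrightarrow> i < j \<longrightarrow> j < n \<longrightarrow> mi_prec d (B!i) (B!j)"
    "sum_list k = r" "\<forall>i<d. (\<Sum>j<n. k!j * (B!j)!i) = \<beta>!i"
    using faa_props[OF assms] by blast
  have dist: "B!i \<noteq> B!j" if "n-s \<le> i" "n-s \<le> j" "i < n" "j < n" "i \<noteq> j" for i j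
  proof (cases "i < j")
    case True
    then have "mi_prec d (B!i) (B!j)" using h(9) that by blast
    then show ?thesis using mi_prec_asym by fastforce
  next
    case False
    then have "mi_prec d (B!j) (B!i)" using h(9) that by simp
    then show ?thesis using mi_prec_asym by fastforce
  qed
  have inj: "inj_on ((!) B) {n-s..<n}"
    by (rule inj_onI) (use dist in fastforce)
  have cnt: "\<forall>j. n-s \<le> j \<and> j < n \<longrightarrow> count (phi n (k, B)) (B!j) = k!j"
  proof (intro allI impI)
    fix j0 assume j0: "n-s \<le> j0 \<and> j0 < n"
    have "(\<Sum>j<n. if B!j = B!j0 then k!j else 0) = (\<Sum>j<n. if j = j0 then k!j0 else 0)"
    proof (rule sum.cong)
      fix j assume j: "j \<in> {..<n}"
      show "(if B!j = B!j0 then k!j else 0) = (if j = j0 then k!j0 else 0)"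
      proof (cases "j < n - s")
        case True then show ?thesis using h(6) j0 by auto
      next
        case False then show ?thesis using dist[of j j0] j j0 by auto
      qed
    qed simp
    also have "\<dots> = k!j0" using j0 by simp
    finally show "count (phi n (k, B)) (B!j0) = k!j0" by (simp add: count_phi)
  qed
  have setm: "set_mset (phi n (k, B)) = (!) B ` {n-s..<n}"
  proof
    show "set_mset (phi n (k, B)) \<subseteq> (!) B ` {n-s..<n}"
    proof
      fix v assume "v \<in># phi n (k, B)"
      then have "0 < count (phi n (k, B)) v" by simp
      then have "0 < (\<Sum>j<n. if B!j = v then k!j else 0)" by (simp only: count_phi)
      have "\<exists>j<n. B!j = v \<and> 0 < k!j"
      proof (rule ccontr)
        assume "\<not> (\<exists>j<n. B!j = v \<and> 0 < k!j)"
        then have "(\<Sum>j<n. if B!j = v then k!j else 0) = 0" by (intro sum.neutral) auto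
        then show False using \<open>0 < (\<Sum>j<n. if B!j = v then k!j else 0)\<close> by simp
      qed
      then obtain j where j: "j < n" "B!j = v" "0 < k!j" by blast
      then have "n - s \<le> j" using h(6) by (metis not_le less_irrefl)
      then show "v \<in> (!) B ` {n-s..<n}" using j by auto
    qed
  next
    show "(!) B ` {n-s..<n} \<subseteq> set_mset (phi n (k, B))"
      using cnt h(7) by (auto simp: count_greater_zero_iff[symmetric])
  qed
  have sz: "size (phi n (k, B)) = r"
    using h(3,10) by (simp add: size_phi sum_list_sum_nth atLeast0LessThan)
  show ?thesis using that h inj cnt setm sz by blast
qed


lemma weight:
  assumes "(k, B) \<in> faa_p d \<beta> r" "n = sum_list \<beta>"
  shows "real (fact r) / (\<Prod>j<n. real (fact (k!j))) =
         real (card (permutations_of_multiset (phi n (k, B))))"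
proof -
  obtain s where h: "1 \<le> s" "s \<le> n" "length k = n" "length B = n" "\<forall>j<n. length (B!j) = d"
    "\<forall>j<n-s. k!j = 0 \<and> B!j = replicate d 0" "\<forall>j. n-s \<le> j \<and> j < n \<longrightarrow> 0 < k!j"
    "\<forall>j. n-s \<le> j \<and> j < n \<longrightarrow> B!j \<noteq> replicate d 0"
    "\<forall>i j. n-s \<le> i \<longrightarrow> i < j \<longrightarrow> j < n \<longrightarrow> mi_prec d (B!i) (B!j)"
    "sum_list k = r" "\<forall>i<d. (\<Sum>j<n. k!j * (B!j)!i) = \<beta>!i"
    "inj_on ((!) B) {n-s..<n}"
    "\<forall>j. n-s \<le> j \<and> j < n \<longrightarrow> count (phi n (k, B)) (B!j) = k!j"
    "set_mset (phi n (k, B)) = (!) B ` {n-s..<n}"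
    "size (phi n (k, B)) = r"
    by (rule phi_info[OF assms])
  define M where "M = phi n (k, B)"
  have "(\<Prod>v\<in>set_mset M. fact (count M v)) = (\<Prod>j\<in>{n-s..<n}. fact (count M (B!j)) :: nat)"
    unfolding M_def h(14) by (rule prod.reindex[OF h(12), unfolded comp_def])
  also have "\<dots> = (\<Prod>j\<in>{n-s..<n}. fact (k!j))"
    using h(13) by (intro prod.cong) (auto simp: M_def)
  also have "\<dots> = (\<Prod>j<n. fact (k!j))"
    by (rule prod.mono_neutral_left) (use h(6) in auto)
  finally have P: "(\<Prod>v\<in>set_mset M. fact (count M v)) = (\<Prod>j<n. fact (k!j) :: nat)" .
  have "card (permutations_of_multiset M) * (\<Prod>j<n. fact (k!j)) = fact r"
    using card_permutations_of_multiset_aux[of M] P h(15) by (simp add: M_def)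
  then have "real (card (permutations_of_multiset M)) * (\<Prod>j<n. real (fact (k!j))) = real (fact r)"
    by (metis of_nat_mult of_nat_prod)
  moreover have "(\<Prod>j<n. real (fact (k!j))) > 0" by (intro prod_pos) auto
  ultimately show ?thesis unfolding M_def by (simp add: field_simps)
qed

lemma phi_inj: "inj_on (phi (sum_list \<beta>)) (faa_p d \<beta> r)"
proof (rule inj_onI)
  fix x y assume x: "x \<in> faa_p d \<beta> r" and y: "y \<in> faa_p d \<beta> r" and eq: "phi (sum_list \<beta>) x = phi (sum_list \<beta>) y"
  define n where "n = sum_list \<beta>"
  obtain k B where xk: "x = (k, B)" by (cases x)
  obtain k' B' where yk: "y = (k', B')" by (cases y)
  obtain s where h: "1 \<le> s" "s \<le> n" "length k = n" "length B = n" "\<forall>j<n. length (B!j) = d"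
    "\<forall>j<n-s. k!j = 0 \<and> B!j = replicate d 0" "\<forall>j. n-s \<le> j \<and> j < n \<longrightarrow> 0 < k!j"
    "\<forall>j. n-s \<le> j \<and> j < n \<longrightarrow> B!j \<noteq> replicate d 0"
    "\<forall>i j. n-s \<le> i \<longrightarrow> i < j \<longrightarrow> j < n \<longrightarrow> mi_prec d (B!i) (B!j)"
    "sum_list k = r" "\<forall>i<d. (\<Sum>j<n. k!j * (B!j)!i) = \<beta>!i"
    "inj_on ((!) B) {n-s..<n}"
    "\<forall>j. n-s \<le> j \<and> j < n \<longrightarrow> count (phi n (k, B)) (B!j) = k!j"
    "set_mset (phi n (k, B)) = (!) B ` {n-s..<n}"
    "size (phi n (k, B)) = r"
    by (rule phi_info[OF x[unfolded xk] n_def])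
  obtain s' where h': "1 \<le> s'" "s' \<le> n" "length k' = n" "length B' = n" "\<forall>j<n. length (B'!j) = d"
    "\<forall>j<n-s'. k'!j = 0 \<and> B'!j = replicate d 0" "\<forall>j. n-s' \<le> j \<and> j < n \<longrightarrow> 0 < k'!j"
    "\<forall>j. n-s' \<le> j \<and> j < n \<longrightarrow> B'!j \<noteq> replicate d 0"
    "\<forall>i j. n-s' \<le> i \<longrightarrow> i < j \<longrightarrow> j < n \<longrightarrow> mi_prec d (B'!i) (B'!j)"
    "sum_list k' = r" "\<forall>i<d. (\<Sum>j<n. k'!j * (B'!j)!i) = \<beta>!i"
    "inj_on ((!) B') {n-s'..<n}"
    "\<forall>j. n-s' \<le> j \<and> j < n \<longrightarrow> count (phi n (k', B')) (B'!j) = k'!j"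
    "set_mset (phi n (k', B')) = (!) B' ` {n-s'..<n}"
    "size (phi n (k', B')) = r"
    by (rule phi_info[OF y[unfolded yk] n_def])
  have M: "phi n (k, B) = phi n (k', B')" using eq xk yk n_def by simp
  define L where "L = map ((!) B) [n-s..<n]"
  define L' where "L' = map ((!) B') [n-s'..<n]"
  have sL: "sorted_wrt (mi_prec d) L"
    unfolding L_def sorted_wrt_iff_nth_less using h(2,9) by auto
  have sL': "sorted_wrt (mi_prec d) L'"
    unfolding L'_def sorted_wrt_iff_nth_less using h'(2,9) by auto
  have "set L = set L'" unfolding L_def L'_def using h(14) h'(14) M by simp
  then have LL: "L = L'" using sorted_wrt_unique[OF mi_prec_asym sL sL'] by blast
  then have ss: "s = s'" unfolding L_def L'_def using h(2) h'(2)
    by (metis diff_diff_cancel length_map length_upt)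
  have BB: "B = B'"
  proof (rule nth_equalityI)
    show "length B = length B'" using h h' by simp
    fix j assume j: "j < length B"
    show "B!j = B'!j"
    proof (cases "j < n - s")
      case True then show ?thesis using h(6) h'(6) ss by simp
    next
      case False
      then have "L ! (j - (n-s)) = B!j" "L' ! (j - (n-s)) = B'!j"
        using j h(2,4) ss by (auto simp: L_def L'_def)
      then show ?thesis using LL by simp
    qed
  qed
  have "k = k'"
  proof (rule nth_equalityI)
    show "length k = length k'" using h h' by simp
    fix j assume j: "j < length k"
    show "k!j = k'!j"
    proof (cases "j < n - s")
      case True then show ?thesis using h(6) h'(6) ss by simp
    next
      case False
      then show ?thesis using h(13) h'(13) ss M BB j h(3) by (metis not_less)
    qed
  qed
  then show "x = y" using xk yk BB by simp
qed

lemma perm_mem: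
  assumes "(k, B) \<in> faa_p d \<beta> r" "n = sum_list \<beta>"
    and xs: "xs \<in> permutations_of_multiset (phi n (k, B))"
  shows "xs \<in> vecs d \<beta> \<and> length xs = r"
proof -
  obtain s where h: "1 \<le> s" "s \<le> n" "length k = n" "length B = n" "\<forall>j<n. length (B!j) = d"
    "\<forall>j<n-s. k!j = 0 \<and> B!j = replicate d 0" "\<forall>j. n-s \<le> j \<and> j < n \<longrightarrow> 0 < k!j"
    "\<forall>j. n-s \<le> j \<and> j < n \<longrightarrow> B!j \<noteq> replicate d 0"
    "\<forall>i j. n-s \<le> i \<longrightarrow> i < j \<longrightarrow> j < n \<longrightarrow> mi_prec d (B!i) (B!j)"
    "sum_list k = r" "\<forall>i<d. (\<Sum>j<n. k!j * (B!j)!i) = \<beta>!i"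
    "inj_on ((!) B) {n-s..<n}"
    "\<forall>j. n-s \<le> j \<and> j < n \<longrightarrow> count (phi n (k, B)) (B!j) = k!j"
    "set_mset (phi n (k, B)) = (!) B ` {n-s..<n}"
    "size (phi n (k, B)) = r"
    by (rule phi_info[OF assms(1,2)])
  have m: "mset xs = phi n (k, B)" using xs by (rule permutations_of_multisetD)
  have len: "length xs = r" using length_finite_permutations_of_multiset[OF xs] h(15) by simp
  have el: "length v = d \<and> v \<noteq> replicate d 0" if "v \<in> set xs" for v
  proof -
    have "v \<in># phi n (k, B)" using that m by (metis set_mset_mset)
    then obtain j where "n - s \<le> j" "j < n" "v = B!j" using h(14) by auto
    then show ?thesis using h(5,8) by auto
  qed
  have co: "(\<Sum>v\<leftarrow>xs. v ! i) = \<beta> ! i" if i: "i < d" for i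
  proof -
    have "(\<Sum>v\<leftarrow>xs. v ! i) = sum_mset (image_mset (\<lambda>v. v ! i) (mset xs))"
      by (metis mset_map sum_mset_sum_list)
    also have "\<dots> = (\<Sum>j<n. k!j * (B!j)!i)" unfolding m by (rule sum_mset_phi)
    finally show ?thesis using h(11) i by simp
  qed
  show ?thesis using el co len by (auto simp: vecs_def)
qed


lemma partA:
  assumes "length \<beta> = d"
  shows "(\<Sum>(k, B) \<in> faa_p d \<beta> r. real (fact r) / (\<Prod>j<sum_list \<beta>. real (fact (k ! j))))
         \<le> real (card {vs \<in> vecs d \<beta>. length vs = r})"
proof -
  define n where "n = sum_list \<beta>"
  define P where "P = faa_p d \<beta> r"
  define F where "F = {vs \<in> vecs d \<beta>. length vs = r}"
  have finF: "finite F" unfolding F_def using vecs_bound[OF assms] by simp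
  have "(\<Sum>(k, B) \<in> P. real (fact r) / (\<Prod>j<n. real (fact (k ! j))))
      = (\<Sum>x\<in>P. real (card (permutations_of_multiset (phi n x))))"
  proof (rule sum.cong)
    fix x assume "x \<in> P"
    then show "(case x of (k, B) \<Rightarrow> real (fact r) / (\<Prod>j<n. real (fact (k ! j)))) =
               real (card (permutations_of_multiset (phi n x)))"
    proof -
      assume xP: "x \<in> P"
      obtain k B where xk: "x = (k, B)" by (cases x)
      have "(k, B) \<in> faa_p d \<beta> r" using xP xk by (simp add: P_def)
      from weight[OF this n_def] show ?thesis unfolding xk by simp
    qed
  qed simp
  also have "\<dots> = (\<Sum>M\<in>phi n ` P. real (card (permutations_of_multiset M)))"
    using sum.reindex[OF phi_inj[of \<beta> d r], of "\<lambda>M. real (card (permutations_of_multiset M))"]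
    by (simp add: P_def n_def comp_def)
  also have "\<dots> \<le> real (card F)"
  proof (cases "finite (phi n ` P)")
    case True
    have "(\<Sum>M\<in>phi n ` P. real (card (permutations_of_multiset M)))
        = real (\<Sum>M\<in>phi n ` P. card (permutations_of_multiset M))" by simp
    also have "(\<Sum>M\<in>phi n ` P. card (permutations_of_multiset M))
        = card (\<Union>M\<in>phi n ` P. permutations_of_multiset M)"
      by (rule card_UN_disjoint[symmetric]) (use True in \<open>auto dest!: permutations_of_multisetD\<close>)
    also have "\<dots> \<le> card F"
    proof (rule card_mono[OF finF])
      show "(\<Union>M\<in>phi n ` P. permutations_of_multiset M) \<subseteq> F"
      proof clarify
        fix x xs assume x: "x \<in> P" and xs: "xs \<in> permutations_of_multiset (phi n x)"
        obtain k B where "x = (k, B)" by (cases x)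
        then show "xs \<in> F" using perm_mem[of k B d \<beta> r n xs] x xs by (simp add: P_def n_def F_def)
      qed
    qed
    finally show ?thesis by simp
  next
    case False then show ?thesis by simp
  qed
  finally show ?thesis by (simp add: P_def n_def F_def)
qed


lemma two_d_le: "2 * d \<le> (2::nat) ^ d"
proof (induction d)
  case (Suc d) then show ?case by (cases d) auto
qed simp

theorem lemma7p4:
  fixes d :: nat and \<beta> :: "nat list"
  assumes "length \<beta> = d" and "\<beta> \<noteq> replicate d 0"
  shows "(\<Sum>r = 1..sum_list \<beta>. real (sum_list \<beta> choose r) *
            (\<Sum>(k, B) \<in> faa_p d \<beta> r. real (fact r) / (\<Prod>j<sum_list \<beta>. real (fact (k ! j)))))
         \<le> 2 ^ (sum_list \<beta> * (d + 1))"
proof -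
  define n where "n = sum_list \<beta>"
  define V where "V = vecs d \<beta>"
  define F where "F r = {vs \<in> V. length vs = r}" for r
  have VB: "finite V" "card V \<le> (2*d)^n" using vecs_bound[OF assms(1)] by (auto simp: V_def n_def)
  have "(\<Sum>r = 1..n. real (n choose r) *
            (\<Sum>(k, B) \<in> faa_p d \<beta> r. real (fact r) / (\<Prod>j<n. real (fact (k ! j)))))
        \<le> (\<Sum>r = 1..n. 2^n * real (card (F r)))"
  proof (rule sum_mono)
    fix r assume "r \<in> {1..n}"
    have a: "(\<Sum>(k, B) \<in> faa_p d \<beta> r. real (fact r) / (\<Prod>j<n. real (fact (k ! j)))) \<le> real (card (F r))"
      using partA[OF assms(1), of r] by (simp add: F_def V_def n_def)
    have b: "real (n choose r) \<le> 2^n" using binomial_le_pow2[of n r]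
      by (metis of_nat_le_iff of_nat_numeral of_nat_power)
    have c: "0 \<le> (\<Sum>(k, B) \<in> faa_p d \<beta> r. real (fact r) / (\<Prod>j<n. real (fact (k ! j))))"
      by (intro sum_nonneg) (auto intro!: divide_nonneg_nonneg prod_nonneg)
    show "real (n choose r) * (\<Sum>(k, B) \<in> faa_p d \<beta> r. real (fact r) / (\<Prod>j<n. real (fact (k ! j))))
          \<le> 2^n * real (card (F r))"
      by (rule mult_mono[OF b a]) (use c in auto)
  qed
  also have "\<dots> = 2^n * real (\<Sum>r = 1..n. card (F r))" by (simp add: sum_distrib_left)
  also have "(\<Sum>r = 1..n. card (F r)) = card (\<Union>r\<in>{1..n}. F r)"
    by (rule card_UN_disjoint[symmetric]) (use VB in \<open>auto simp: F_def\<close>)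
  also have "\<dots> \<le> card V" by (rule card_mono[OF VB(1)]) (auto simp: F_def)
  also have "\<dots> \<le> (2*d)^n" by (rule VB(2))
  also have "(2*d)^n \<le> (2^d)^n" by (rule power_mono[OF two_d_le]) simp
  finally have "(\<Sum>r = 1..n. real (n choose r) *
            (\<Sum>(k, B) \<in> faa_p d \<beta> r. real (fact r) / (\<Prod>j<n. real (fact (k ! j)))))
        \<le> 2^n * real ((2^d)^n)" by (simp add: mult_left_mono)
  also have "\<dots> = 2 ^ (n * (d + 1))" by (simp add: power_mult[symmetric] power_add[symmetric] algebra_simps)
  finally show ?thesis by (simp add: n_def)
qed

end
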